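(* Let $A$ be an abelian group and $(A_i)_{i\in I}$ a family of subgroups such that the lattice of subgroups generated by the $A_i$ (under $+$ and $\cap$) is distributive. Let $B$ be one of the $A_i$ and $n$ a positive integer. If $$H^n\big((B\cap A_i)_{i\in I},A\big)=0\quad\text{and}\quad H^n\Big(\big((B+A_i)/B\big)_{i\in I},A/B\Big)=0,$$ then $H^n\big((A_i)_{i\in I},A\big)=0$.
   Context: For an abelian group $M$ and a family $(M_i)_{i\in I}$ of subgroups, $H^n((M_i),M)$ denotes the $n$-th cohomology of the cochain complex $C^n=\prod_{i_0,\dots,i_n\in I}M/(M_{i_0}+\cdots+M_{i_n})$ with differential $(df)(i_0,\dots,i_n)=\sum_{j=0}^n(-1)^j f(i_0,\dots,\widehat{i_j},\dots,i_n)\bmod M_{i_0}+\cdots+M_{i_n}$. A lattice is distributive if one (equivalently, each) of its operations distributes over the other. *)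

theory Defs
  imports "HOL-Algebra.Algebra"
begin

(* Abelian groups are HOL-Algebra comm_groups (written multiplicatively).
   Sum of subgroups M_{i_0} + ... + M_{i_k}: the subgroup generated by their union. *)
definition sumsub :: "('a,'b) monoid_scheme \<Rightarrow> 'a set list \<Rightarrow> 'a set" where
  "sumsub G Ns = generate G (\<Union> (set Ns))"

definition del_at :: "nat \<Rightarrow> 'i list \<Rightarrow> 'i list" where
  "del_at j is = take j is @ drop (Suc j) is"

(* Cochains are represented by representatives f : I^{k+1} -> M; the value of the
   cochain at (i_0..i_k) is the class of f(i_0..i_k) in M/(M_{i_0}+...+M_{i_k}). *)
definition cdiff :: "('a,'b) monoid_scheme \<Rightarrow> ('i list \<Rightarrow> 'a) \<Rightarrow> 'i list \<Rightarrow> 'a" where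
  "cdiff G f is = finprod G (\<lambda>j. f (del_at j is) [^]\<^bsub>G\<^esub> ((-1::int) ^ j)) {..<length is}"

(* H^n((M_i)_{i}, M) = 0, for n >= 1: every n-cocycle is an n-coboundary.
   Here the ambient group M is carrier G, and the index set I is the type 'i. *)
definition cohom_vanishes :: "('a,'b) monoid_scheme \<Rightarrow> ('i \<Rightarrow> 'a set) \<Rightarrow> nat \<Rightarrow> bool" where
  "cohom_vanishes G M n \<longleftrightarrow>
    (\<forall>f. (\<forall>is. length is = n + 1 \<longrightarrow> f is \<in> carrier G)
       \<and> (\<forall>is. length is = n + 2 \<longrightarrow> cdiff G f is \<in> sumsub G (map M is))
     \<longrightarrow> (\<exists>g. (\<forall>is. length is = n \<longrightarrow> g is \<in> carrier G)
            \<and> (\<forall>is. length is = n + 1 \<longrightarrow>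
                  cdiff G g is \<otimes>\<^bsub>G\<^esub> inv\<^bsub>G\<^esub> (f is) \<in> sumsub G (map M is))))"

definition subgroup_lattice :: "('a,'b) monoid_scheme \<Rightarrow> ('i \<Rightarrow> 'a set) \<Rightarrow> 'a set set" where
  "subgroup_lattice G A = \<Inter> {Lat. range A \<subseteq> Lat \<and>
      (\<forall>U\<in>Lat. \<forall>V\<in>Lat. generate G (U \<union> V) \<in> Lat \<and> U \<inter> V \<in> Lat)}"

definition distributive_subgroup_lattice :: "('a,'b) monoid_scheme \<Rightarrow> ('i \<Rightarrow> 'a set) \<Rightarrow> bool" where
  "distributive_subgroup_lattice G A \<longleftrightarrow>
    (\<forall>U\<in>subgroup_lattice G A. \<forall>V\<in>subgroup_lattice G A. \<forall>W\<in>subgroup_lattice G A.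
       U \<inter> generate G (V \<union> W) = generate G ((U \<inter> V) \<union> (U \<inter> W)))"

end

theory Submission
  imports Defs
begin


lemma length_del_at: "j < length is \<Longrightarrow> length (del_at j is) = length is - 1"
  by (simp add: del_at_def)

lemma set_del_at: "set (del_at j is) \<subseteq> set is"
  unfolding del_at_def by (metis Un_least set_append set_drop_subset set_take_subset)

lemma del_at_nth: "j < length is \<Longrightarrow> i < length is - 1 \<Longrightarrow>
   del_at j is ! i = (if i < j then is ! i else is ! Suc i)"
  by (auto simp: del_at_def nth_append min_def)

lemma del_at_swap: "k < j \<Longrightarrow> j < length is \<Longrightarrow>
   del_at k (del_at j is) = del_at (j - 1) (del_at k is)"
  apply (rule nth_equalityI)
   apply (simp add: length_del_at)
  apply (auto simp: length_del_at del_at_nth)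
  done



lemma (in comm_group) finprod_int_pow:
  assumes "finite A" "f \<in> A \<rightarrow> carrier G"
  shows "(finprod G f A) [^] (e::int) = finprod G (\<lambda>a. f a [^] e) A"
  using assms
proof (induction A rule: finite_induct)
  case empty
  then show ?case by simp
next
  case (insert x F)
  then show ?case by (simp add: int_pow_distrib Pi_def)
qed

lemma (in comm_group) finprod_Sigma:
  assumes "finite J" "finite K" "\<And>p. p \<in> J \<times> K \<Longrightarrow> x p \<in> carrier G"
  shows "finprod G (\<lambda>j. finprod G (\<lambda>k. x (j,k)) K) J = finprod G x (J \<times> K)"
  using assms
proof (induction J rule: finite_induct)
  case empty
  then show ?case by simp
next
  case (insert j F)
  have e: "insert j F \<times> K = Pair j ` K \<union> F \<times> K" by auto
  have "finprod G x (insert j F \<times> K) = finprod G x (Pair j ` K) \<otimes> finprod G x (F \<times> K)"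
    unfolding e using insert by (intro finprod_Un_disjoint) auto
  also have "finprod G x (Pair j ` K) = finprod G (\<lambda>k. x (j,k)) K"
    using insert by (subst finprod_reindex) (auto simp: inj_on_def)
  finally show ?case using insert by (subst finprod_insert) (auto intro!: finprod_closed)
qed

lemma (in comm_group) cdiff_closed:
  assumes "\<And>js. length js = m \<Longrightarrow> f js \<in> carrier G" "length is = Suc m"
  shows "cdiff G f is \<in> carrier G"
  unfolding cdiff_def using assms by (auto intro!: finprod_closed simp: length_del_at)

lemma (in comm_group) cdiff_mult:
  assumes "\<And>js. length js = m \<Longrightarrow> f js \<in> carrier G"
    "\<And>js. length js = m \<Longrightarrow> g js \<in> carrier G" "length is = Suc m"
  shows "cdiff G (\<lambda>js. f js \<otimes> g js) is = cdiff G f is \<otimes> cdiff G g is"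
proof -
  have fc: "f (del_at j is) \<in> carrier G" "g (del_at j is) \<in> carrier G" if "j < length is" for j
    using assms that by (auto simp: length_del_at)
  have "cdiff G (\<lambda>js. f js \<otimes> g js) is = (\<Otimes>j\<in>{..<length is}. f (del_at j is) [^] ((-1::int) ^ j) \<otimes> g (del_at j is) [^] ((-1::int) ^ j))"
    unfolding cdiff_def using fc by (intro finprod_cong') (auto simp: int_pow_distrib)
  also have "\<dots> = cdiff G f is \<otimes> cdiff G g is"
    unfolding cdiff_def using fc by (intro finprod_multf) auto
  finally show ?thesis .
qed

lemma (in comm_group) cdiff_one:
  "cdiff G (\<lambda>js. \<one>) is = \<one>"
  unfolding cdiff_def by simp

lemma (in comm_group) cdiff_inv:
  assumes "\<And>js. length js = m \<Longrightarrow> f js \<in> carrier G" "length is = Suc m"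
  shows "cdiff G (\<lambda>js. inv f js) is = inv cdiff G f is"
proof -
  have "cdiff G f is \<otimes> cdiff G (\<lambda>js. inv f js) is = cdiff G (\<lambda>js. f js \<otimes> inv f js) is"
    using assms by (subst cdiff_mult[of m]) auto
  also have "\<dots> = cdiff G (\<lambda>js. \<one>) is"
    unfolding cdiff_def using assms by (intro finprod_cong') (auto simp: length_del_at)
  finally have "cdiff G f is \<otimes> cdiff G (\<lambda>js. inv f js) is = \<one>" by (simp add: cdiff_one)
  then show ?thesis using assms
    by (metis cdiff_closed inv_closed inv_equality m_comm)
qed

lemma (in comm_group) cdiff_cong:
  assumes "\<And>js. length js = m \<Longrightarrow> f js \<in> carrier G"
    "\<And>js. length js = m \<Longrightarrow> f js = g js" "length is = Suc m"
  shows "cdiff G f is = cdiff G g is"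
  unfolding cdiff_def using assms by (intro finprod_cong') (auto simp: length_del_at)

lemma (in comm_group) cdiff_mem:
  assumes "subgroup S G" "\<And>j. j < length is \<Longrightarrow> f (del_at j is) \<in> S"
  shows "cdiff G f is \<in> S"
proof -
  interpret S: subgroup S G by fact
  have "\<And>A. A \<subseteq> {..<length is} \<Longrightarrow> finprod G (\<lambda>j. f (del_at j is) [^] ((-1::int) ^ j)) A \<in> S"
  proof -
    fix A assume A: "A \<subseteq> {..<length is}"
    have "finite A" using A finite_subset by blast
    then show "finprod G (\<lambda>j. f (del_at j is) [^] ((-1::int) ^ j)) A \<in> S" using A
    proof (induction A rule: finite_induct)
      case empty then show ?case by simp
    next
      case (insert x F)
      have mem: "\<And>j. j \<in> insert x F \<Longrightarrow> f (del_at j is) [^] ((-1::int) ^ j) \<in> S"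
        using insert assms(2) by (auto intro: subgroup_int_pow_closed[OF assms(1)])
      then have "f (del_at j is) [^] ((-1::int) ^ j) \<in> carrier G" if "j \<in> insert x F" for j
        using that S.subset by blast
      then show ?case using insert mem
        by (subst finprod_insert) (auto simp: Pi_def)
    qed
  qed
  then show ?thesis unfolding cdiff_def by blast
qed

lemma (in comm_group) cdiff_cdiff:
  assumes g: "\<And>js. length js = m \<Longrightarrow> g js \<in> carrier G" and len: "length is = Suc (Suc m)"
  shows "cdiff G (cdiff G g) is = \<one>"
proof -
  define N where "N = Suc (Suc m)"
  define x where "x p = g (del_at (snd p) (del_at (fst p) is)) [^] ((-1::int) ^ (fst p + snd p))" for p
  define S1 where "S1 = {(j,k). j < N \<and> k < j}"
  define S2 where "S2 = {(j,k). j \<le> k \<and> k < Suc m}"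
  define phi where "phi p = (snd p, fst p - 1)" for p :: "nat \<times> nat"
  have gc: "g (del_at k (del_at j is)) \<in> carrier G" if "j < N" "k < Suc m" for j k
    using that len by (intro g) (simp add: length_del_at N_def)
  have xc: "x p \<in> carrier G" if "p \<in> {..<N} \<times> {..<Suc m}" for p
    using that gc unfolding x_def by (cases p) auto
  have "cdiff G (cdiff G g) is = finprod G (\<lambda>j. finprod G (\<lambda>k. x (j,k)) {..<Suc m}) {..<N}"
    unfolding cdiff_def
  proof (intro finprod_cong')
    fix j assume j: "j \<in> {..<N}"
    have l: "length (del_at j is) = Suc m" using j len by (simp add: length_del_at N_def)
    have "(\<Otimes>k\<in>{..<length (del_at j is)}. g (del_at k (del_at j is)) [^] ((-1::int) ^ k)) [^] ((-1::int) ^ j)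
       = (\<Otimes>k\<in>{..<Suc m}. (g (del_at k (del_at j is)) [^] ((-1::int) ^ k)) [^] ((-1::int) ^ j))"
      unfolding l using gc j by (subst finprod_int_pow) (auto simp: N_def)
    also have "\<dots> = (\<Otimes>k\<in>{..<Suc m}. x (j,k))"
      unfolding x_def using gc j by (intro finprod_cong') (auto simp: int_pow_pow power_add mult.commute)
    finally show "(\<Otimes>k\<in>{..<length (del_at j is)}. g (del_at k (del_at j is)) [^] ((-1::int) ^ k)) [^] ((-1::int) ^ j)
       = (\<Otimes>k\<in>{..<Suc m}. x (j,k))" .
  next
    show "{..<length is} = {..<N}" using len N_def by simp
  next
    show "(\<lambda>j. finprod G (\<lambda>k. x (j,k)) {..<Suc m}) \<in> {..<N} \<rightarrow> carrier G"
      using xc by (auto intro!: finprod_closed)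
  qed
  also have "\<dots> = finprod G x ({..<N} \<times> {..<Suc m})"
    using xc by (intro finprod_Sigma) auto
  also have "{..<N} \<times> {..<Suc m} = S1 \<union> S2"
    unfolding S1_def S2_def N_def by auto
  also have "finprod G x (S1 \<union> S2) = finprod G x S1 \<otimes> finprod G x S2"
  proof (intro finprod_Un_disjoint)
    show "finite S1" unfolding S1_def
      by (rule finite_subset[of _ "{..<N} \<times> {..<N}"]) auto
    show "finite S2" unfolding S2_def
      by (rule finite_subset[of _ "{..<Suc m} \<times> {..<Suc m}"]) auto
    show "S1 \<inter> S2 = {}" unfolding S1_def S2_def by auto
    show "x \<in> S1 \<rightarrow> carrier G" using xc unfolding S1_def N_def by auto
    show "x \<in> S2 \<rightarrow> carrier G" using xc unfolding S2_def N_def by auto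
  qed
  also have "S2 = phi ` S1"
  proof
    show "phi ` S1 \<subseteq> S2" unfolding S1_def S2_def phi_def N_def by auto
    show "S2 \<subseteq> phi ` S1"
    proof
      fix p assume "p \<in> S2"
      then obtain j k where p: "p = (j,k)" "j \<le> k" "k < Suc m" unfolding S2_def by auto
      then have "(Suc k, j) \<in> S1" unfolding S1_def N_def by auto
      moreover have "phi (Suc k, j) = p" using p phi_def by simp
      ultimately show "p \<in> phi ` S1" by force
    qed
  qed
  also have "finprod G x (phi ` S1) = finprod G (\<lambda>p. x (phi p)) S1"
  proof (intro finprod_reindex)
    show "x \<in> phi ` S1 \<rightarrow> carrier G" using xc unfolding S1_def phi_def N_def by auto
    show "inj_on phi S1" unfolding inj_on_def S1_def phi_def by auto
  qed
  also have "finprod G x S1 \<otimes> finprod G (\<lambda>p. x (phi p)) S1 = finprod G (\<lambda>p. x p \<otimes> x (phi p)) S1"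
    using xc unfolding S1_def phi_def N_def by (subst finprod_multf) auto
  also have "\<dots> = finprod G (\<lambda>p. \<one>) S1"
  proof (intro finprod_cong')
    fix p assume "p \<in> S1"
    then obtain j k where p: "p = (j,k)" "j < N" "k < j" unfolding S1_def by auto
    have sw: "del_at (j - Suc 0) (del_at k is) = del_at k (del_at j is)"
      using del_at_swap[of k j "is"] p len N_def by simp
    have s: "(-1::int) ^ (k + (j - Suc 0)) = - ((-1) ^ (j + k))"
    proof -
      obtain i where "j = Suc i" using p by (cases j) auto
      then show ?thesis by (simp add: add.commute)
    qed
    have c: "g (del_at k (del_at j is)) \<in> carrier G" using p gc N_def by simp
    show "x p \<otimes> x (phi p) = \<one>"
      unfolding x_def phi_def p using c by (simp add: sw s int_pow_neg)
  qed auto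
  finally show ?thesis by simp
qed




lemma cdiff_hom:
  assumes "comm_group G" "comm_group H" "h \<in> hom G H"
    "\<And>js. length js = m \<Longrightarrow> f js \<in> carrier G" "length is = Suc m"
  shows "h (cdiff G f is) = cdiff H (\<lambda>js. h (f js)) is"
proof -
  interpret G: comm_group G by fact
  interpret H: comm_group H by fact
  interpret group_hom G H h using assms by (simp add: group_hom_def group_hom_axioms_def G.is_group H.is_group)
  have fc: "f (del_at j is) \<in> carrier G" if "j < length is" for j
    using assms that by (auto simp: length_del_at)
  have gen: "h (finprod G u A) = finprod H (\<lambda>a. h (u a)) A" if "finite A" "u \<in> A \<rightarrow> carrier G" for u A
    using that
  proof (induction A rule: finite_induct)
    case empty then show ?case by simp
  next
    case (insert x F)
    then show ?case by (simp add: Pi_def)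
  qed
  have "h (cdiff G f is) = (\<Otimes>\<^bsub>H\<^esub>j\<in>{..<length is}. h (f (del_at j is) [^]\<^bsub>G\<^esub> ((-1::int) ^ j)))"
    unfolding cdiff_def using fc by (intro gen) auto
  also have "\<dots> = cdiff H (\<lambda>js. h (f js)) is"
    unfolding cdiff_def using fc by (intro H.finprod_cong') (auto simp: hom_int_pow)
  finally show ?thesis .
qed

lemma (in group) generate_union_generate:
  assumes "P \<subseteq> carrier G" "Q \<subseteq> carrier G"
  shows "generate G (P \<union> generate G Q) = generate G (P \<union> Q)"
proof
  show "generate G (P \<union> Q) \<subseteq> generate G (P \<union> generate G Q)"
    by (intro mono_generate) (auto intro: generate.incl)
  have "generate G Q \<subseteq> generate G (P \<union> Q)" by (intro mono_generate) auto
  then have "P \<union> generate G Q \<subseteq> generate G (P \<union> Q)" by (auto intro: generate.incl)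
  then show "generate G (P \<union> generate G Q) \<subseteq> generate G (P \<union> Q)"
    using assms by (intro generate_subgroup_incl generate_is_subgroup) auto
qed

lemma (in group) generate_subgroup_eq:
  assumes "subgroup H G" shows "generate G H = H"
  using assms generate_subgroup_incl[of H H] by (auto intro: generate.incl)

lemma lat_A: "A i \<in> subgroup_lattice G A"
  unfolding subgroup_lattice_def by auto

lemma lat_gen: "U \<in> subgroup_lattice G A \<Longrightarrow> V \<in> subgroup_lattice G A \<Longrightarrow> generate G (U \<union> V) \<in> subgroup_lattice G A"
  unfolding subgroup_lattice_def by auto

lemma lat_int: "U \<in> subgroup_lattice G A \<Longrightarrow> V \<in> subgroup_lattice G A \<Longrightarrow> U \<inter> V \<in> subgroup_lattice G A"
  unfolding subgroup_lattice_def by auto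

lemma sumsub_Cons:
  assumes "group G" "\<And>i. subgroup (A i) G" "xs \<noteq> []"
  shows "sumsub G (map A (x # xs)) = generate G (A x \<union> sumsub G (map A xs))"
proof -
  interpret group G by fact
  have s: "\<Union> (A ` set xs) \<subseteq> carrier G" using assms(2) subgroup.subset by blast
  show ?thesis unfolding sumsub_def
    using generate_union_generate[OF subgroup.subset[OF assms(2)] s, of x] by simp
qed

lemma sumsub_single:
  assumes "group G" "subgroup (A x) G"
  shows "sumsub G (map A [x]) = A x"
  unfolding sumsub_def using group.generate_subgroup_eq[OF assms] by simp

lemma sumsub_lat:
  assumes "group G" "\<And>i. subgroup (A i) G" "js \<noteq> []"
  shows "sumsub G (map A js) \<in> subgroup_lattice G A"
  using assms(3)
proof (induction js)
  case Nil then show ?case by simp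
next
  case (Cons x xs)
  show ?case
  proof (cases "xs = []")
    case True
    then show ?thesis using sumsub_single[where A=A and x=x, OF assms(1) assms(2)[of x]] lat_A by simp
  next
    case False
    show ?thesis unfolding sumsub_Cons[where A=A and x=x, OF assms(1,2) False] by (rule lat_gen[OF lat_A Cons.IH[OF False]])
  qed
qed

lemma sumsub_distrib:
  assumes "group G" "\<And>i. subgroup (A i) G" "distributive_subgroup_lattice G A" "js \<noteq> []"
  shows "A b \<inter> sumsub G (map A js) = sumsub G (map (\<lambda>i. A b \<inter> A i) js)"
  using assms(4)
proof (induction js)
  case Nil then show ?case by simp
next
  case (Cons x xs)
  have sB: "\<And>i. subgroup (A b \<inter> A i) G" using assms(2) group.subgroups_Inter_pair[OF assms(1)] by blast
  show ?case
  proof (cases "xs = []")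
    case True
    then show ?thesis using sumsub_single[where A=A and x=x, OF assms(1) assms(2)[of x]] sumsub_single[where A="\<lambda>i. A b \<inter> A i" and x=x, OF assms(1) sB[of x]] by simp
  next
    case False
    have "A b \<inter> sumsub G (map A (x # xs)) = A b \<inter> generate G (A x \<union> sumsub G (map A xs))"
      using sumsub_Cons[where A=A and x=x, OF assms(1,2) False] by simp
    also have "\<dots> = generate G ((A b \<inter> A x) \<union> (A b \<inter> sumsub G (map A xs)))"
      using assms(3) lat_A[of A b G] lat_A[of A x G] sumsub_lat[OF assms(1,2) False]
      unfolding distributive_subgroup_lattice_def by simp
    also have "\<dots> = generate G ((A b \<inter> A x) \<union> sumsub G (map (\<lambda>i. A b \<inter> A i) xs))"
      using Cons.IH False by simp
    also have "\<dots> = sumsub G (map (\<lambda>i. A b \<inter> A i) (x # xs))"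
      using sumsub_Cons[where A="\<lambda>i. A b \<inter> A i" and x=x, OF assms(1) sB False] by simp
    finally show ?thesis .
  qed
qed




lemma (in comm_group) alg_ident:
  assumes "c \<in> carrier G" "d \<in> carrier G" "x \<in> carrier G" "a \<in> carrier G"
  shows "c \<otimes> d \<otimes> inv x = (d \<otimes> inv (x \<otimes> inv c \<otimes> inv a)) \<otimes> inv a"
proof -
  have "(d \<otimes> inv (x \<otimes> inv c \<otimes> inv a)) \<otimes> inv a = a \<otimes> (c \<otimes> (d \<otimes> (inv a \<otimes> inv x)))"
    using assms by (simp add: inv_mult m_ac)
  also have "a \<otimes> (c \<otimes> (d \<otimes> (inv a \<otimes> inv x))) = c \<otimes> (d \<otimes> (a \<otimes> (inv a \<otimes> inv x)))"
    using assms by (simp add: m_lcomm)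
  also have "a \<otimes> (inv a \<otimes> inv x) = inv x"
    using assms by (simp add: m_assoc[symmetric])
  finally show ?thesis using assms by (simp add: m_assoc)
qed

lemma (in comm_group) main_aux:
  fixes A :: "'i \<Rightarrow> 'a set" and b :: 'i and n :: nat
  assumes "comm_group G"
    and "\<And>i. subgroup (A i) G"
    and "distributive_subgroup_lattice G A"
    and "n > 0"
    and "cohom_vanishes G (\<lambda>i. A b \<inter> A i) n"
    and "cohom_vanishes (G Mod (A b))
           (\<lambda>i. (\<lambda>a. A b #>\<^bsub>G\<^esub> a) ` generate G (A b \<union> A i)) n"
  shows "cohom_vanishes G A n"
proof -
  define B where "B = A b"
  define Q where "Q = G Mod B"
  define h where "h = (\<lambda>a. B #> a)"
  define QA where "QA i = h ` generate G (B \<union> A i)" for i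
  define SA where "SA js = sumsub G (map A js)" for js
  have sB: "subgroup B G" using assms(2) B_def by simp
  have nB: "B \<lhd> G" using sB subgroup_imp_normal by blast
  have Qc: "comm_group Q" unfolding Q_def using abelian_FactGroup[OF sB] .
  interpret Q: comm_group Q by (rule Qc)
  have hom: "h \<in> hom G Q" unfolding h_def Q_def using normal.r_coset_hom_Mod[OF nB] .
  interpret gh: group_hom G Q h using hom by (simp add: group_hom_def group_hom_axioms_def is_group Q.is_group)
  have Asub: "A i \<subseteq> carrier G" for i using assms(2) subgroup.subset by blast
  have UAsub: "\<Union> (A ` S) \<subseteq> carrier G" for S using Asub by blast
  have SAsub: "subgroup (SA js) G" for js
    unfolding SA_def sumsub_def using generate_is_subgroup[OF UAsub] by simp
  have SA_del: "SA (del_at j js) \<subseteq> SA js" for j js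
    unfolding SA_def sumsub_def using set_del_at[of j js] by (intro mono_generate) auto
  have A_SA: "i \<in> set js \<Longrightarrow> A i \<subseteq> SA js" for i js
    unfolding SA_def sumsub_def by (auto intro: generate.incl)
  have h5: "cohom_vanishes G (\<lambda>i. B \<inter> A i) n" using assms(5) B_def by simp
  have h6: "cohom_vanishes Q QA n" using assms(6) unfolding Q_def QA_def h_def B_def .
  show ?thesis unfolding cohom_vanishes_def
  proof (intro allI impI)
    fix f
    assume fa: "(\<forall>is. length is = n + 1 \<longrightarrow> f is \<in> carrier G) \<and>
         (\<forall>is. length is = n + 2 \<longrightarrow> cdiff G f is \<in> sumsub G (map A is))"
    have fc: "length js = Suc n \<Longrightarrow> f js \<in> carrier G" for js using fa by simp
    have fcoc: "length js = Suc (Suc n) \<Longrightarrow> cdiff G f js \<in> SA js" for js using fa SA_def by simp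
    define F where "F js = h (f js)" for js
    have Fc: "length js = Suc n \<Longrightarrow> F js \<in> carrier Q" for js
      unfolding F_def using fc hom by (auto simp: hom_def)
    have img: "h ` SA js \<subseteq> sumsub Q (map QA js)" for js
    proof -
      have "h ` SA js = generate Q (h ` \<Union> (A ` set js))"
        unfolding SA_def sumsub_def using gh.generate_img[OF UAsub] by simp
      also have "\<dots> \<subseteq> generate Q (\<Union> (QA ` set js))"
        unfolding QA_def by (intro Q.mono_generate) (auto intro: generate.incl)
      finally show ?thesis unfolding sumsub_def by simp
    qed
    have Fcoc: "cdiff Q F js \<in> sumsub Q (map QA js)" if "length js = Suc (Suc n)" for js
    proof -
      have "cdiff Q F js = h (cdiff G f js)"
        unfolding F_def using cdiff_hom[OF assms(1) Qc hom, of "Suc n" f js] fc that by simp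
      then show ?thesis using img fcoc[OF that] by blast
    qed
    have pre: "(\<forall>is. length is = n + 1 \<longrightarrow> F is \<in> carrier Q) \<and>
       (\<forall>is. length is = n + 2 \<longrightarrow> cdiff Q F is \<in> sumsub Q (map QA is))"
      using Fc Fcoc by simp
    have "\<exists>g. (\<forall>is. length is = n \<longrightarrow> g is \<in> carrier Q)
            \<and> (\<forall>is. length is = n + 1 \<longrightarrow>
                  cdiff Q g is \<otimes>\<^bsub>Q\<^esub> inv\<^bsub>Q\<^esub> (F is) \<in> sumsub Q (map QA is))"
      by (rule mp[OF spec[OF h6[unfolded cohom_vanishes_def]] pre])
    then obtain G' where G'c: "\<And>js. length js = n \<Longrightarrow> G' js \<in> carrier Q"
      and G'cob: "\<And>js. length js = n + 1 \<Longrightarrow>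
          cdiff Q G' js \<otimes>\<^bsub>Q\<^esub> inv\<^bsub>Q\<^esub> (F js) \<in> sumsub Q (map QA js)"
      by blast
    define g0 where "g0 js = (SOME x. x \<in> carrier G \<and> G' js = h x)" for js
    have g0: "g0 js \<in> carrier G \<and> G' js = h (g0 js)" if "length js = n" for js
    proof -
      have "\<exists>x. x \<in> carrier G \<and> G' js = h x"
        using G'c[OF that] unfolding Q_def h_def carrier_FactGroup by auto
      then show ?thesis unfolding g0_def by (rule someI_ex)
    qed
    define T where "T js = B <#> SA js" for js
    have Tsub: "subgroup (T js) G" for js unfolding T_def using mult_subgroups[OF sB SAsub] .
    have BT: "B \<subseteq> T js" for js
    proof
      fix x assume "x \<in> B"
      then have "x \<otimes> \<one> \<in> T js" unfolding T_def set_mult_def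
        using subgroup.one_closed[OF SAsub] by blast
      then show "x \<in> T js" using \<open>x \<in> B\<close> sB subgroup.mem_carrier by fastforce
    qed
    have SAT: "SA js \<subseteq> T js" for js
    proof
      fix x assume "x \<in> SA js"
      then have "\<one> \<otimes> x \<in> T js" unfolding T_def set_mult_def
        using subgroup.one_closed[OF sB] by blast
      then show "x \<in> T js" using \<open>x \<in> SA js\<close> SAsub subgroup.mem_carrier by fastforce
    qed
    have c0c: "length js = Suc n \<Longrightarrow> cdiff G g0 js \<in> carrier G" for js
      using cdiff_closed[of n g0 js] g0 by blast
    have key: "cdiff G g0 js \<otimes> inv f js \<in> T js" if len: "length js = Suc n" for js
    proof -
      define y where "y = cdiff G g0 js \<otimes> inv f js"
      have yc: "y \<in> carrier G" unfolding y_def using c0c fc len by simp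
      have "h y = h (cdiff G g0 js) \<otimes>\<^bsub>Q\<^esub> inv\<^bsub>Q\<^esub> h (f js)"
        unfolding y_def using c0c fc len by simp
      also have "h (cdiff G g0 js) = cdiff Q (\<lambda>js. h (g0 js)) js"
        using cdiff_hom[OF assms(1) Qc hom, of n g0 js] g0 len by blast
      also have "\<dots> = cdiff Q G' js"
      proof (rule Q.cdiff_cong[OF _ _ len])
        show "h (g0 js') \<in> carrier Q" if "length js' = n" for js'
          using g0[OF that] gh.hom_closed by blast
        show "h (g0 js') = G' js'" if "length js' = n" for js'
          using g0[OF that] by simp
      qed
      also have "h (f js) = F js" unfolding F_def ..
      finally have "h y \<in> sumsub Q (map QA js)"
        using G'cob[of js] len by simp
      also have "sumsub Q (map QA js) \<subseteq> h ` T js"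
        unfolding sumsub_def
      proof (intro Q.generate_subgroup_incl gh.subgroup_img_is_subgroup Tsub)
        have "generate G (B \<union> A i) \<subseteq> T js" if "i \<in> set js" for i
          using BT[of js] A_SA[OF that] SAT[of js] Tsub[of js] by (intro generate_subgroup_incl) auto
        then have "QA i \<subseteq> h ` T js" if "i \<in> set js" for i
          unfolding QA_def using that by (intro image_mono) blast
        then show "\<Union> (set (map QA js)) \<subseteq> h ` T js" unfolding set_map by (intro UN_least)
      qed
      finally obtain t where t: "t \<in> T js" "h y = h t" by blast
      have "B #> y = B #> t" using t(2) unfolding h_def .
      then have "y \<in> B #> t" using rcos_self[OF yc sB] by simp
      then obtain b' where b': "b' \<in> B" "y = b' \<otimes> t" unfolding r_coset_def by blast
      have "b' \<otimes> t \<in> T js" using BT[of js] b'(1) t(1) subgroup.m_closed[OF Tsub[of js]] by blast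
      then show ?thesis using b'(2) unfolding y_def by simp
    qed
    define a where "a js = (SOME a. a \<in> SA js \<and> f js \<otimes> inv (cdiff G g0 js) \<otimes> inv a \<in> B)" for js
    have a: "a js \<in> SA js \<and> f js \<otimes> inv (cdiff G g0 js) \<otimes> inv (a js) \<in> B" if len: "length js = Suc n" for js
    proof -
      have "inv (cdiff G g0 js \<otimes> inv f js) \<in> T js"
        by (rule subgroup.m_inv_closed[OF Tsub key[OF len]])
      also have "inv (cdiff G g0 js \<otimes> inv f js) = inv (cdiff G g0 js) \<otimes> f js"
        using c0c[OF len] fc[OF len] by (simp add: inv_mult)
      also have "\<dots> = f js \<otimes> inv (cdiff G g0 js)"
        using c0c[OF len] fc[OF len] by (intro m_comm) simp_all
      finally obtain bb aa where bb: "bb \<in> B" "aa \<in> SA js" "f js \<otimes> inv (cdiff G g0 js) = bb \<otimes> aa"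
        unfolding T_def set_mult_def by blast
      have aac: "aa \<in> carrier G" using subgroup.mem_carrier[OF SAsub bb(2)] .
      have bbc: "bb \<in> carrier G" using subgroup.mem_carrier[OF sB bb(1)] .
      have "f js \<otimes> inv (cdiff G g0 js) \<otimes> inv aa = bb \<otimes> aa \<otimes> inv aa"
        using bb(3) by simp
      also have "\<dots> = bb" using aac bbc by (simp add: m_assoc)
      finally have "f js \<otimes> inv (cdiff G g0 js) \<otimes> inv aa = bb" .
      then have "\<exists>a. a \<in> SA js \<and> f js \<otimes> inv (cdiff G g0 js) \<otimes> inv a \<in> B" using bb by auto
      then show ?thesis unfolding a_def by (rule someI_ex)
    qed
    have ac: "a js \<in> carrier G" if "length js = Suc n" for js
      using subgroup.mem_carrier[OF SAsub conjunct1[OF a[OF that]]] .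
    define bf where "bf js = f js \<otimes> inv (cdiff G g0 js) \<otimes> inv (a js)" for js
    have bfB: "bf js \<in> B" if "length js = Suc n" for js
      unfolding bf_def using conjunct2[OF a[OF that]] .
    have bfc: "bf js \<in> carrier G" if "length js = Suc n" for js
      using subgroup.mem_carrier[OF sB bfB[OF that]] .
    have bfcoc: "cdiff G bf js \<in> sumsub G (map (\<lambda>i. B \<inter> A i) js)" if len: "length js = Suc (Suc n)" for js
    proof -
      have dl: "length (del_at j js) = Suc n" if "j < length js" for j
        using that len by (simp add: length_del_at)
      have inB: "cdiff G bf js \<in> B"
        by (rule cdiff_mem[OF sB], rule bfB, rule dl)
      have "cdiff G bf js = cdiff G (\<lambda>js. f js \<otimes> inv (cdiff G g0 js)) js \<otimes> cdiff G (\<lambda>js. inv (a js)) js"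
        unfolding bf_def using len fc c0c ac by (intro cdiff_mult[of "Suc n"]) auto
      also have "cdiff G (\<lambda>js. f js \<otimes> inv (cdiff G g0 js)) js = cdiff G f js \<otimes> cdiff G (\<lambda>js. inv (cdiff G g0 js)) js"
        using len fc c0c by (intro cdiff_mult[of "Suc n"]) auto
      also have "cdiff G (\<lambda>js. inv (cdiff G g0 js)) js = inv (cdiff G (cdiff G g0) js)"
        using len c0c by (intro cdiff_inv[of "Suc n"]) auto
      also have "cdiff G (cdiff G g0) js = \<one>"
        using len g0 by (intro cdiff_cdiff[of n]) auto
      also have "cdiff G (\<lambda>js. inv (a js)) js = inv (cdiff G a js)"
        using len ac by (intro cdiff_inv[of "Suc n"]) auto
      finally have e: "cdiff G bf js = cdiff G f js \<otimes> inv \<one> \<otimes> inv (cdiff G a js)" .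
      have "cdiff G a js \<in> SA js"
      proof (rule cdiff_mem[OF SAsub])
        fix j assume "j < length js"
        then show "a (del_at j js) \<in> SA js"
          using SA_del[of j js] conjunct1[OF a[OF dl]] by blast
      qed
      then have inSA: "cdiff G bf js \<in> SA js"
        unfolding e by (intro subgroup.m_closed[OF SAsub] subgroup.m_inv_closed[OF SAsub] subgroup.one_closed[OF SAsub] fcoc[OF len])
      have "js \<noteq> []" using len by auto
      then have "B \<inter> SA js = sumsub G (map (\<lambda>i. B \<inter> A i) js)"
        unfolding SA_def B_def by (rule sumsub_distrib[OF is_group assms(2,3)])
      then show ?thesis using inB inSA by blast
    qed
    have pre2: "(\<forall>is. length is = n + 1 \<longrightarrow> bf is \<in> carrier G) \<and>
       (\<forall>is. length is = n + 2 \<longrightarrow> cdiff G bf is \<in> sumsub G (map (\<lambda>i. B \<inter> A i) is))"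
      using bfc bfcoc by simp
    have "\<exists>g. (\<forall>is. length is = n \<longrightarrow> g is \<in> carrier G)
            \<and> (\<forall>is. length is = n + 1 \<longrightarrow>
                  cdiff G g is \<otimes> inv (bf is) \<in> sumsub G (map (\<lambda>i. B \<inter> A i) is))"
      by (rule mp[OF spec[OF h5[unfolded cohom_vanishes_def]] pre2])
    then obtain g1 where g1c: "\<And>js. length js = n \<Longrightarrow> g1 js \<in> carrier G"
      and g1cob: "\<And>js. length js = n + 1 \<Longrightarrow>
          cdiff G g1 js \<otimes> inv (bf js) \<in> sumsub G (map (\<lambda>i. B \<inter> A i) js)"
      by blast
    show "\<exists>g. (\<forall>is. length is = n \<longrightarrow> g is \<in> carrier G) \<and>
            (\<forall>is. length is = n + 1 \<longrightarrow> cdiff G g is \<otimes> inv f is \<in> sumsub G (map A is))"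
    proof (intro exI conjI allI impI)
      fix js :: "'i list" assume "length js = n"
      then show "g0 js \<otimes> g1 js \<in> carrier G" using g0 g1c by (intro m_closed) simp_all
    next
      fix js :: "'i list" assume len': "length js = n + 1"
      then have len: "length js = Suc n" by simp
      have sub: "sumsub G (map (\<lambda>i. B \<inter> A i) js) \<subseteq> SA js"
        unfolding SA_def sumsub_def by (intro mono_generate) auto
      have e1: "cdiff G (\<lambda>js. g0 js \<otimes> g1 js) js = cdiff G g0 js \<otimes> cdiff G g1 js"
        using len g0 g1c by (intro cdiff_mult[of n]) auto
      have "cdiff G g0 js \<otimes> cdiff G g1 js \<otimes> inv f js
          = (cdiff G g1 js \<otimes> inv (bf js)) \<otimes> inv (a js)"
        unfolding bf_def
        by (rule alg_ident[OF c0c[OF len] cdiff_closed[of n g1 js, OF g1c len] fc[OF len] ac[OF len]])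
      then have eq: "cdiff G (\<lambda>js. g0 js \<otimes> g1 js) js \<otimes> inv f js
          = (cdiff G g1 js \<otimes> inv (bf js)) \<otimes> inv (a js)" unfolding e1 .
      have m1: "cdiff G g1 js \<otimes> inv (bf js) \<in> SA js" using g1cob[OF len'] sub by blast
      have m2: "a js \<in> SA js" using conjunct1[OF a[OF len]] .
      have "(cdiff G g1 js \<otimes> inv (bf js)) \<otimes> inv (a js) \<in> SA js"
        by (rule subgroup.m_closed[OF SAsub m1 subgroup.m_inv_closed[OF SAsub m2]])
      then show "cdiff G (\<lambda>js. g0 js \<otimes> g1 js) js \<otimes> inv f js \<in> sumsub G (map A js)"
        unfolding eq SA_def .
    qed
  qed
qed

theorem mainTheorem11:
  fixes G :: "('a,'b) monoid_scheme" and A :: "'i \<Rightarrow> 'a set" and b :: 'i and n :: nat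
  assumes "comm_group G"
    and "\<And>i. subgroup (A i) G"
    and "distributive_subgroup_lattice G A"
    and "n > 0"
    and "cohom_vanishes G (\<lambda>i. A b \<inter> A i) n"
    and "cohom_vanishes (G Mod (A b))
           (\<lambda>i. (\<lambda>a. A b #>\<^bsub>G\<^esub> a) ` generate G (A b \<union> A i)) n"
  shows "cohom_vanishes G A n"
  using comm_group.main_aux[OF assms(1) assms(1) assms(2-6)] by blast


end
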